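(* Let $n\ge2$, let $R$ be a commutative unital profinite ring, and let $G$ be a profinite group. Then $T^{\bar{\mathbb{U}}_n(R)}(G)=T^{\mathbb{U}_{n-1}(R)}(G)$.
   Context: For profinite groups $\mathbb{U}$ and $G$, $T^{\mathbb{U}}(G)$ denotes the intersection of the kernels of all continuous homomorphisms $G\to\mathbb{U}$. $\mathbb{U}_n(R)$ is the group of unipotent upper-triangular $(n+1)\times(n+1)$ matrices over $R$; $R^+$ embeds centrally in it via $r\mapsto I_{n+1}+rE_{1,n+1}$, and $\bar{\mathbb{U}}_n(R)=\mathbb{U}_n(R)/R^+$. *)

theory Defs
  imports "HOL-Analysis.Analysis" "HOL-Algebra.Algebra"
begin

definition totally_disconnected_space :: "'a topology \<Rightarrow> bool" where
  "totally_disconnected_space Y \<longleftrightarrow>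
     (\<forall>x \<in> topspace Y. connected_component_of Y x = (\<lambda>y. y = x))"

definition profinite_space :: "'a topology \<Rightarrow> bool" where
  "profinite_space Y \<longleftrightarrow> compact_space Y \<and> Hausdorff_space Y \<and> totally_disconnected_space Y"

definition topological_group :: "('g, 'b) monoid_scheme \<Rightarrow> 'g topology \<Rightarrow> bool" where
  "topological_group G T \<longleftrightarrow> group G \<and> topspace T = carrier G \<and>
     continuous_map (prod_topology T T) T (\<lambda>(x, y). x \<otimes>\<^bsub>G\<^esub> y) \<and>
     continuous_map T T (\<lambda>x. inv\<^bsub>G\<^esub> x)"

definition profinite_group :: "('g, 'b) monoid_scheme \<Rightarrow> 'g topology \<Rightarrow> bool" where
  "profinite_group G T \<longleftrightarrow> topological_group G T \<and> profinite_space T"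

definition profinite_ring :: "('r::comm_ring_1) topology \<Rightarrow> bool" where
  "profinite_ring TR \<longleftrightarrow> topspace TR = UNIV \<and>
     continuous_map (prod_topology TR TR) TR (\<lambda>(x, y). x + y) \<and>
     continuous_map TR TR uminus \<and>
     continuous_map (prod_topology TR TR) TR (\<lambda>(x, y). x * y) \<and>
     profinite_space TR"

definition quotient_topology :: "'a topology \<Rightarrow> ('a \<Rightarrow> 'b) \<Rightarrow> 'b topology" where
  "quotient_topology Y f =
     topology (\<lambda>U. U \<subseteq> f ` topspace Y \<and> openin Y {x \<in> topspace Y. f x \<in> U})"

text \<open>U_n(R): (n+1)x(n+1) unipotent upper triangular matrices over R, with row
  and column indices 0..n; entries outside that range are 0.\<close>
definition unitri_carrier :: "nat \<Rightarrow> (nat \<times> nat \<Rightarrow> 'r::comm_ring_1) set" where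
  "unitri_carrier n = {M. \<forall>i j. (i = j \<and> i \<le> n \<longrightarrow> M (i, j) = 1) \<and>
                                 (\<not> (i < j \<and> j \<le> n) \<and> \<not> (i = j \<and> i \<le> n) \<longrightarrow> M (i, j) = 0)}"

definition Unitri :: "nat \<Rightarrow> (nat \<times> nat \<Rightarrow> 'r::comm_ring_1) monoid" where
  "Unitri n = \<lparr> carrier = unitri_carrier n,
      mult = (\<lambda>A B. \<lambda>(i, j). if i \<le> n \<and> j \<le> n then (\<Sum>k\<le>n. A (i, k) * B (k, j)) else 0),
      one = (\<lambda>(i, j). if i = j \<and> i \<le> n then 1 else 0) \<rparr>"

definition Unitri_top :: "'r topology \<Rightarrow> nat \<Rightarrow> (nat \<times> nat \<Rightarrow> 'r::comm_ring_1) topology" where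
  "Unitri_top TR n = subtopology (product_topology (\<lambda>_. TR) UNIV) (unitri_carrier n)"

text \<open>The central copy of R^+: r \<mapsto> I + r E_{1,n+1} (here entry (0,n)).\<close>
definition central_embed :: "nat \<Rightarrow> 'r \<Rightarrow> (nat \<times> nat \<Rightarrow> 'r::comm_ring_1)" where
  "central_embed n r = (\<one>\<^bsub>Unitri n\<^esub>)((0, n) := r)"

definition central_sub :: "nat \<Rightarrow> (nat \<times> nat \<Rightarrow> 'r::comm_ring_1) set" where
  "central_sub n = range (central_embed n)"

definition Unitri_bar :: "nat \<Rightarrow> (nat \<times> nat \<Rightarrow> 'r::comm_ring_1) set monoid" where
  "Unitri_bar n = Unitri n Mod central_sub n"

definition Unitri_bar_top :: "'r topology \<Rightarrow> nat \<Rightarrow> (nat \<times> nat \<Rightarrow> 'r::comm_ring_1) set topology" where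
  "Unitri_bar_top TR n = quotient_topology (Unitri_top TR n) (\<lambda>M. central_sub n #>\<^bsub>Unitri n\<^esub> M)"

definition T_kernel :: "('g, 'a) monoid_scheme \<Rightarrow> 'g topology \<Rightarrow>
                        ('u, 'c) monoid_scheme \<Rightarrow> 'u topology \<Rightarrow> 'g set" where
  "T_kernel G TG U TU = carrier G \<inter>
     \<Inter> {kernel G U f | f. f \<in> hom G U \<and> continuous_map TG TU f}"

end

theory Submission
  imports Defs
begin

lemma Umult: "(A \<otimes>\<^bsub>Unitri n\<^esub> B) (i,j) = (if i \<le> n \<and> j \<le> n then \<Sum>k\<le>n. A(i,k)*B(k,j) else 0)"
  by (simp add: Unitri_def)
lemma Uone: "\<one>\<^bsub>Unitri n\<^esub> (i,j) = (if i=j \<and> i\<le>n then 1 else 0)"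
  by (simp add: Unitri_def)
lemma Ucar: "carrier (Unitri n) = unitri_carrier n"
  by (simp add: Unitri_def)

lemma uc_low: "A \<in> unitri_carrier n \<Longrightarrow> \<not>(i<j \<and> j \<le> n) \<Longrightarrow> A(i,j) = (if i=j \<and> i\<le>n then 1 else 0)"
  by (auto simp: unitri_carrier_def)

lemma term_zero: "a \<in> unitri_carrier n \<Longrightarrow> b \<in> unitri_carrier n \<Longrightarrow> k \<le> n \<Longrightarrow> \<not>(i \<le> k \<and> k \<le> j) \<Longrightarrow> a(i,k)*b(k,j) = 0"
  by (cases "k < i") (auto simp: uc_low)

lemma uc_mult: assumes a: "a \<in> unitri_carrier n" and b: "b \<in> unitri_carrier n"
  shows "a \<otimes>\<^bsub>Unitri n\<^esub> b \<in> unitri_carrier n"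
proof -
  have D: "(\<Sum>k\<le>n. a(i,k)*b(k,i)) = 1" if "i \<le> n" for i
  proof -
    have "(\<Sum>k\<le>n. a(i,k)*b(k,i)) = a(i,i)*b(i,i) + (\<Sum>k\<in>{..n}-{i}. a(i,k)*b(k,i))"
      using that by (simp add: sum.remove)
    also have "(\<Sum>k\<in>{..n}-{i}. a(i,k)*b(k,i)) = 0"
      by (rule sum.neutral) (auto intro!: term_zero[OF a b])
    finally show ?thesis using a b that by (simp add: uc_low)
  qed
  have Z: "(\<Sum>k\<le>n. a(i,k)*b(k,j)) = 0" if "j < i" for i j
    by (rule sum.neutral) (use that in \<open>auto intro!: term_zero[OF a b]\<close>)
  show ?thesis unfolding unitri_carrier_def
    by (auto simp: Umult D Z)
qed

lemma Uone_left: "a \<in> unitri_carrier n \<Longrightarrow> \<one>\<^bsub>Unitri n\<^esub> \<otimes>\<^bsub>Unitri n\<^esub> a = a"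
  apply (rule ext, clarify)
  apply (auto simp: Umult Uone if_distrib[where f="\<lambda>x. x * _"] sum.delta uc_low cong: if_cong)
  done

lemma Uone_n: "0 < n \<Longrightarrow> \<one>\<^bsub>Unitri n\<^esub> \<in> unitri_carrier n"
  by (auto simp: unitri_carrier_def Uone)

lemma L_lem: assumes b: "b \<in> unitri_carrier n" and n: "0 < n"
  shows "(a((0,n):=x)) \<otimes>\<^bsub>Unitri n\<^esub> b = (a \<otimes>\<^bsub>Unitri n\<^esub> b)((0,n) := (a \<otimes>\<^bsub>Unitri n\<^esub> b)(0,n) + (x - a(0,n)))"
proof (rule ext, clarify)
  fix i j
  show "((a((0,n):=x)) \<otimes>\<^bsub>Unitri n\<^esub> b) (i,j) = ((a \<otimes>\<^bsub>Unitri n\<^esub> b)((0,n) := (a \<otimes>\<^bsub>Unitri n\<^esub> b)(0,n) + (x - a(0,n)))) (i,j)"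
  proof (cases "i = 0 \<and> j \<le> n")
    case True
    have "\<forall>k. (a((0,n):=x))(0,k) * b(k,j) = a(0,k)*b(k,j) + (if k = n then (x - a(0,n))*b(n,j) else 0)"
      by (auto simp: algebra_simps)
    then have "(\<Sum>k\<le>n. (a((0,n):=x))(0,k) * b(k,j)) = (\<Sum>k\<le>n. a(0,k)*b(k,j)) + (x - a(0,n))*b(n,j)"
      by (simp add: sum.distrib)
    then show ?thesis using True b n by (auto simp: Umult uc_low)
  next
    case False
    then show ?thesis by (auto simp: Umult)
  qed
qed

lemma R_lem: assumes a: "a \<in> unitri_carrier n" and n: "0 < n"
  shows "a \<otimes>\<^bsub>Unitri n\<^esub> (b((0,n):=y)) = (a \<otimes>\<^bsub>Unitri n\<^esub> b)((0,n) := (a \<otimes>\<^bsub>Unitri n\<^esub> b)(0,n) + (y - b(0,n)))"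
proof (rule ext, clarify)
  fix i j
  show "(a \<otimes>\<^bsub>Unitri n\<^esub> (b((0,n):=y))) (i,j) = ((a \<otimes>\<^bsub>Unitri n\<^esub> b)((0,n) := (a \<otimes>\<^bsub>Unitri n\<^esub> b)(0,n) + (y - b(0,n)))) (i,j)"
  proof (cases "j = n \<and> i \<le> n")
    case True
    have "\<forall>k. a(i,k) * (b((0,n):=y))(k,n) = a(i,k)*b(k,n) + (if k = 0 then a(i,0)*(y - b(0,n)) else 0)"
      by (auto simp: algebra_simps)
    then have "(\<Sum>k\<le>n. a(i,k) * (b((0,n):=y))(k,n)) = (\<Sum>k\<le>n. a(i,k)*b(k,n)) + a(i,0)*(y - b(0,n))"
      by (simp add: sum.distrib)
    then show ?thesis using True a n by (auto simp: Umult uc_low)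
  next
    case False
    then show ?thesis by (auto simp: Umult)
  qed
qed

definition cls :: "nat \<Rightarrow> (nat \<times> nat \<Rightarrow> 'r) \<Rightarrow> (nat \<times> nat \<Rightarrow> 'r) set" where
  "cls n a = {d. \<forall>p. p \<noteq> (0,n) \<longrightarrow> d p = a p}"

lemma cls_eq: "d \<in> cls n a \<longleftrightarrow> d = a((0,n) := d(0,n))"
  by (auto simp: cls_def fun_eq_iff)

lemma cls_self: "a \<in> cls n a" by (simp add: cls_def)

lemma cls_same: "d \<in> cls n a \<Longrightarrow> cls n d = cls n a"
  by (auto simp: cls_def)

lemma cls_sub: assumes n: "0 < n" and a: "a \<in> unitri_carrier n" and d: "d \<in> cls n a"
  shows "d \<in> unitri_carrier n"
  unfolding unitri_carrier_def mem_Collect_eq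
proof (intro allI)
  fix i j
  show "(i = j \<and> i \<le> n \<longrightarrow> d (i, j) = 1) \<and> (\<not> (i < j \<and> j \<le> n) \<and> \<not> (i = j \<and> i \<le> n) \<longrightarrow> d (i, j) = 0)"
  proof (cases "(i,j) = (0,n)")
    case True then show ?thesis using n by auto
  next
    case False
    then have "d (i,j) = a (i,j)" using d unfolding cls_def by blast
    then show ?thesis using a unfolding unitri_carrier_def by auto
  qed
qed

lemma coset_cls: assumes n: "0 < n" and a: "a \<in> unitri_carrier (n::nat)"
  shows "central_sub n #>\<^bsub>Unitri n\<^esub> (a :: nat\<times>nat \<Rightarrow> 'r::comm_ring_1) = cls n a"
proof -
  have e: "central_embed n r \<otimes>\<^bsub>Unitri n\<^esub> a = a((0,n) := a(0,n) + r)" for r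
    unfolding central_embed_def
    using L_lem[OF a n, of "\<one>\<^bsub>Unitri n\<^esub>" r] Uone_left[OF a] n
    by (simp add: Uone)
  show ?thesis
    unfolding r_coset_def central_sub_def
  proof (intro equalityI subsetI)
    fix d assume "d \<in> (\<Union>h\<in>range (central_embed n). {h \<otimes>\<^bsub>Unitri n\<^esub> a})"
    then show "d \<in> cls n a" using e by (auto simp: cls_def)
  next
    fix d assume "d \<in> cls n a"
    then have "d = central_embed n (d(0,n) - a(0,n)) \<otimes>\<^bsub>Unitri n\<^esub> a"
      by (simp add: e cls_eq[symmetric])
    then show "d \<in> (\<Union>h\<in>range (central_embed n). {h \<otimes>\<^bsub>Unitri n\<^esub> a})" by blast
  qed
qed

lemma central_cls: "central_sub n = cls n \<one>\<^bsub>Unitri n\<^esub>"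
proof (intro equalityI subsetI)
  fix d assume "d \<in> central_sub n"
  then show "d \<in> cls n \<one>\<^bsub>Unitri n\<^esub>"
    by (auto simp: central_sub_def central_embed_def cls_def)
next
  fix d assume "d \<in> cls n \<one>\<^bsub>Unitri n\<^esub>"
  then have "d = central_embed n (d(0,n))" by (simp add: central_embed_def cls_eq[symmetric])
  then show "d \<in> central_sub n" by (simp add: central_sub_def)
qed

lemma setmult_cls: assumes n: "0 < n" and a: "a \<in> unitri_carrier n" and b: "b \<in> unitri_carrier n"
  shows "cls n a <#>\<^bsub>Unitri n\<^esub> cls n b = cls n (a \<otimes>\<^bsub>Unitri n\<^esub> b)"
  unfolding set_mult_def
proof (intro equalityI subsetI)
  fix e assume "e \<in> (\<Union>h\<in>cls n a. \<Union>k\<in>cls n b. {h \<otimes>\<^bsub>Unitri n\<^esub> k})"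
  then obtain c d where c: "c \<in> cls n a" and d: "d \<in> cls n b" and e: "e = c \<otimes>\<^bsub>Unitri n\<^esub> d" by blast
  have dc: "d \<in> unitri_carrier n" using cls_sub[OF n b d] .
  have "e = (a((0,n):=c(0,n))) \<otimes>\<^bsub>Unitri n\<^esub> (b((0,n):=d(0,n)))"
  proof -
    have "c = a((0,n):=c(0,n))" "d = b((0,n):=d(0,n))" using c d cls_eq by blast+
    then show ?thesis using e by simp
  qed
  also have "\<dots> = (a \<otimes>\<^bsub>Unitri n\<^esub> (b((0,n):=d(0,n))))((0,n) := (a \<otimes>\<^bsub>Unitri n\<^esub> (b((0,n):=d(0,n))))(0,n) + (c(0,n) - a(0,n)))"
    by (rule L_lem[OF _ n]) (metis cls_eq d dc)
  also have "a \<otimes>\<^bsub>Unitri n\<^esub> (b((0,n):=d(0,n))) = (a \<otimes>\<^bsub>Unitri n\<^esub> b)((0,n) := (a \<otimes>\<^bsub>Unitri n\<^esub> b)(0,n) + (d(0,n) - b(0,n)))"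
    by (rule R_lem[OF a n])
  finally show "e \<in> cls n (a \<otimes>\<^bsub>Unitri n\<^esub> b)" by (simp add: cls_def)
next
  fix e assume e: "e \<in> cls n (a \<otimes>\<^bsub>Unitri n\<^esub> b)"
  define x where "x = e(0,n) - (a \<otimes>\<^bsub>Unitri n\<^esub> b)(0,n) + a(0,n)"
  have "e = (a((0,n):=x)) \<otimes>\<^bsub>Unitri n\<^esub> b"
    using e L_lem[OF b n, of a x] by (simp add: x_def cls_eq[symmetric])
  moreover have "a((0,n):=x) \<in> cls n a" by (simp add: cls_def)
  ultimately show "e \<in> (\<Union>h\<in>cls n a. \<Union>k\<in>cls n b. {h \<otimes>\<^bsub>Unitri n\<^esub> k})"
    using cls_self[of b n] by blast
qed

definition pad :: "nat \<Rightarrow> (nat \<times> nat \<Rightarrow> 'r::comm_ring_1) \<Rightarrow> (nat \<times> nat \<Rightarrow> 'r)" where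
  "pad m A = (\<lambda>(i,j). if i \<le> m \<and> j \<le> m then A(i,j) else if i = j \<and> i = Suc m then 1 else 0)"
definition tlb :: "nat \<Rightarrow> (nat \<times> nat \<Rightarrow> 'r::comm_ring_1) \<Rightarrow> (nat \<times> nat \<Rightarrow> 'r)" where
  "tlb m A = (\<lambda>(i,j). if i \<le> m \<and> j \<le> m then A(i,j) else 0)"
definition brb :: "nat \<Rightarrow> (nat \<times> nat \<Rightarrow> 'r::comm_ring_1) \<Rightarrow> (nat \<times> nat \<Rightarrow> 'r)" where
  "brb m A = (\<lambda>(i,j). if i \<le> m \<and> j \<le> m then A(Suc i, Suc j) else 0)"

lemma pad_car: "A \<in> unitri_carrier m \<Longrightarrow> pad m A \<in> unitri_carrier (Suc m)"
  unfolding unitri_carrier_def pad_def by auto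

lemma tlb_car: "A \<in> unitri_carrier (Suc m) \<Longrightarrow> tlb m A \<in> unitri_carrier m"
  unfolding tlb_def by (subst unitri_carrier_def) (auto simp: uc_low)

lemma brb_car: "A \<in> unitri_carrier (Suc m) \<Longrightarrow> brb m A \<in> unitri_carrier m"
  unfolding brb_def by (subst unitri_carrier_def) (auto simp: uc_low)

lemma pad_mult: assumes A: "A \<in> unitri_carrier m" and B: "B \<in> unitri_carrier m"
  shows "pad m (A \<otimes>\<^bsub>Unitri m\<^esub> B) = pad m A \<otimes>\<^bsub>Unitri (Suc m)\<^esub> pad m B"
proof (rule ext, clarify)
  fix i j
  show "pad m (A \<otimes>\<^bsub>Unitri m\<^esub> B) (i,j) = (pad m A \<otimes>\<^bsub>Unitri (Suc m)\<^esub> pad m B) (i,j)"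
  proof (cases "i \<le> m \<and> j \<le> m")
    case True
    then show ?thesis by (simp add: Umult pad_def sum.atMost_Suc)
  next
    case F: False
    show ?thesis
    proof (cases "i = Suc m \<and> j \<le> Suc m")
      case True
      have "(\<Sum>k\<le>Suc m. pad m A (Suc m, k) * pad m B (k, j)) = (\<Sum>k\<le>Suc m. if k = Suc m then pad m B (Suc m, j) else 0)"
        by (rule sum.cong) (auto simp: pad_def)
      then show ?thesis using True by (simp add: Umult pad_def)
    next
      case F2: False
      show ?thesis
      proof (cases "i \<le> m \<and> j = Suc m")
        case True
        have "(\<Sum>k\<le>Suc m. pad m A (i, k) * pad m B (k, Suc m)) = 0"
          by (rule sum.neutral) (use True in \<open>auto simp: pad_def\<close>)
        then show ?thesis using True by (simp add: Umult pad_def)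
      next
        case False
        then show ?thesis using F F2 by (auto simp: Umult pad_def)
      qed
    qed
  qed
qed

lemma tlb_mult: assumes a: "a \<in> unitri_carrier (Suc m)" and b: "b \<in> unitri_carrier (Suc m)"
  shows "tlb m (a \<otimes>\<^bsub>Unitri (Suc m)\<^esub> b) = tlb m a \<otimes>\<^bsub>Unitri m\<^esub> tlb m b"
proof (rule ext, clarify)
  fix i j
  show "tlb m (a \<otimes>\<^bsub>Unitri (Suc m)\<^esub> b) (i,j) = (tlb m a \<otimes>\<^bsub>Unitri m\<^esub> tlb m b) (i,j)"
  proof (cases "i \<le> m \<and> j \<le> m")
    case True
    then have "b (Suc m, j) = 0" using b by (simp add: uc_low)
    moreover have "(\<Sum>k\<le>m. tlb m a (i,k) * tlb m b (k,j)) = (\<Sum>k\<le>m. a (i,k) * b (k,j))"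
      by (rule sum.cong) (use True in \<open>auto simp: tlb_def\<close>)
    ultimately show ?thesis using True by (simp add: Umult tlb_def sum.atMost_Suc)
  next
    case False
    then show ?thesis by (auto simp: Umult tlb_def)
  qed
qed

lemma brb_mult: assumes a: "a \<in> unitri_carrier (Suc m)" and b: "b \<in> unitri_carrier (Suc m)"
  shows "brb m (a \<otimes>\<^bsub>Unitri (Suc m)\<^esub> b) = brb m a \<otimes>\<^bsub>Unitri m\<^esub> brb m b"
proof (rule ext, clarify)
  fix i j
  show "brb m (a \<otimes>\<^bsub>Unitri (Suc m)\<^esub> b) (i,j) = (brb m a \<otimes>\<^bsub>Unitri m\<^esub> brb m b) (i,j)"
  proof (cases "i \<le> m \<and> j \<le> m")
    case True
    then have "a (Suc i, 0) = 0" using a by (simp add: uc_low)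
    moreover have "(\<Sum>k\<le>m. brb m a (i,k) * brb m b (k,j)) = (\<Sum>k\<le>m. a (Suc i,Suc k) * b (Suc k,Suc j))"
      by (rule sum.cong) (use True in \<open>auto simp: brb_def\<close>)
    moreover have "(\<Sum>k\<le>Suc m. a(Suc i,k)*b(k,Suc j)) = a(Suc i,0)*b(0,Suc j) + (\<Sum>k\<le>m. a(Suc i,Suc k)*b(Suc k,Suc j))"
      by (rule sum.atMost_Suc_shift)
    ultimately show ?thesis using True by (simp add: Umult brb_def del: sum.atMost_Suc)
  next
    case False
    then show ?thesis by (auto simp: Umult brb_def)
  qed
qed

lemma cls_tlb: "d \<in> cls (Suc m) a \<Longrightarrow> tlb m d = tlb m a"
  unfolding cls_def tlb_def by (rule ext) auto
lemma cls_brb: "d \<in> cls (Suc m) a \<Longrightarrow> brb m d = brb m a"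
  unfolding cls_def brb_def by (rule ext) auto

lemma tlb_brb_one: assumes m: "0 < m" and a: "a \<in> unitri_carrier (Suc m)"
  and t: "tlb m a = \<one>\<^bsub>Unitri m\<^esub>" and b: "brb m a = \<one>\<^bsub>Unitri m\<^esub>"
  shows "a \<in> cls (Suc m) \<one>\<^bsub>Unitri (Suc m)\<^esub>"
  unfolding cls_def mem_Collect_eq
proof (intro allI impI)
  fix p :: "nat \<times> nat" assume p: "p \<noteq> (0, Suc m)"
  obtain i j where ij: "p = (i,j)" by (cases p)
  show "a p = \<one>\<^bsub>Unitri (Suc m)\<^esub> p"
  proof (cases "i < j \<and> j \<le> Suc m")
    case False
    then show ?thesis using a by (simp add: ij uc_low Uone)
  next
    case True
    show ?thesis
    proof (cases "j \<le> m")
      case True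
      then have "tlb m a (i,j) = \<one>\<^bsub>Unitri m\<^esub> (i,j)" using t by simp
      then show ?thesis using True \<open>i < j \<and> j \<le> Suc m\<close> by (simp add: ij tlb_def Uone)
    next
      case False
      then have jj: "j = Suc m" using True by simp
      then have "i \<noteq> 0" using p ij by simp
      then obtain i' where i': "i = Suc i'" by (cases i) auto
      have "brb m a (i',m) = \<one>\<^bsub>Unitri m\<^esub> (i',m)" using b by simp
      then show ?thesis using True jj i' by (simp add: ij brb_def Uone)
    qed
  qed
qed

lemma qt_open: "openin (quotient_topology Y q) U \<longleftrightarrow> U \<subseteq> q ` topspace Y \<and> openin Y {x \<in> topspace Y. q x \<in> U}"
proof -
  have "istopology (\<lambda>U. U \<subseteq> q ` topspace Y \<and> openin Y {x \<in> topspace Y. q x \<in> U})"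
    unfolding istopology_def
  proof (rule conjI)
    show "\<forall>S T. S \<subseteq> q ` topspace Y \<and> openin Y {x \<in> topspace Y. q x \<in> S} \<longrightarrow>
      T \<subseteq> q ` topspace Y \<and> openin Y {x \<in> topspace Y. q x \<in> T} \<longrightarrow>
      S \<inter> T \<subseteq> q ` topspace Y \<and> openin Y {x \<in> topspace Y. q x \<in> S \<inter> T}"
    proof (intro allI impI)
      fix S T assume S: "S \<subseteq> q ` topspace Y \<and> openin Y {x \<in> topspace Y. q x \<in> S}"
        and T: "T \<subseteq> q ` topspace Y \<and> openin Y {x \<in> topspace Y. q x \<in> T}"
      have "{x \<in> topspace Y. q x \<in> S \<inter> T} = {x \<in> topspace Y. q x \<in> S} \<inter> {x \<in> topspace Y. q x \<in> T}" by auto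
      then show "S \<inter> T \<subseteq> q ` topspace Y \<and> openin Y {x \<in> topspace Y. q x \<in> S \<inter> T}"
        using S T by auto
    qed
    show "\<forall>K. (\<forall>k\<in>K. k \<subseteq> q ` topspace Y \<and> openin Y {x \<in> topspace Y. q x \<in> k}) \<longrightarrow>
      \<Union>K \<subseteq> q ` topspace Y \<and> openin Y {x \<in> topspace Y. q x \<in> \<Union>K}"
    proof (intro allI impI)
      fix K assume K: "\<forall>k\<in>K. k \<subseteq> q ` topspace Y \<and> openin Y {x \<in> topspace Y. q x \<in> k}"
      have "{x \<in> topspace Y. q x \<in> \<Union>K} = \<Union>((\<lambda>k. {x \<in> topspace Y. q x \<in> k}) ` K)" by auto
      moreover have "openin Y (\<Union>((\<lambda>k. {x \<in> topspace Y. q x \<in> k}) ` K))"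
        using K by (intro openin_Union) auto
      ultimately show "\<Union>K \<subseteq> q ` topspace Y \<and> openin Y {x \<in> topspace Y. q x \<in> \<Union>K}"
        using K by auto
    qed
  qed
  then show ?thesis unfolding quotient_topology_def by simp
qed

lemma qt_topspace: "topspace (quotient_topology Y q) = q ` topspace Y"
proof -
  have "{x \<in> topspace Y. q x \<in> q ` topspace Y} = topspace Y" by auto
  then have "openin (quotient_topology Y q) (q ` topspace Y)"
    by (simp add: qt_open)
  then have "q ` topspace Y \<subseteq> topspace (quotient_topology Y q)" by (rule openin_subset)
  moreover have "topspace (quotient_topology Y q) \<subseteq> q ` topspace Y"
    using qt_open[of Y q "topspace (quotient_topology Y q)"] by simp
  ultimately show ?thesis by blast
qed

lemma qt_cont: "continuous_map Y (quotient_topology Y q) q"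
  unfolding continuous_map_def qt_topspace by (auto simp: qt_open)

lemma qt_univ: assumes c: "continuous_map Y Z (\<lambda>x. h (q x))" and im: "h \<in> q ` topspace Y \<rightarrow> topspace Z"
  shows "continuous_map (quotient_topology Y q) Z h"
  unfolding continuous_map_def qt_topspace
proof (intro conjI allI impI)
  show "h \<in> q ` topspace Y \<rightarrow> topspace Z" by (rule im)
  fix U assume U: "openin Z U"
  have "{x \<in> topspace Y. q x \<in> {y \<in> q ` topspace Y. h y \<in> U}} = {x \<in> topspace Y. h (q x) \<in> U}" by auto
  moreover have "openin Y {x \<in> topspace Y. h (q x) \<in> U}" using c U by (simp add: continuous_map_def)
  ultimately show "openin (quotient_topology Y q) {x \<in> q ` topspace Y. h x \<in> U}"
    by (simp add: qt_open)
qed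

lemma topU: "topspace TR = UNIV \<Longrightarrow> topspace (Unitri_top TR k) = unitri_carrier k"
  by (simp add: Unitri_top_def)

lemma cm_coord: assumes TR: "topspace TR = UNIV"
  and co: "\<And>p. (\<exists>p'. \<forall>A. F A p = A p') \<or> (\<exists>c. \<forall>A. F A p = c)"
  and im: "F \<in> unitri_carrier k \<rightarrow> unitri_carrier l"
  shows "continuous_map (Unitri_top TR k) (Unitri_top TR l) F"
  unfolding Unitri_top_def continuous_map_in_subtopology
proof
  show "F \<in> topspace (subtopology (product_topology (\<lambda>_. TR) UNIV) (unitri_carrier k)) \<rightarrow> unitri_carrier l"
    using im TR by simp
  show "continuous_map (subtopology (product_topology (\<lambda>_. TR) UNIV) (unitri_carrier k)) (product_topology (\<lambda>_. TR) UNIV) F"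
    unfolding continuous_map_componentwise_UNIV
  proof
    fix p
    from co[of p] show "continuous_map (subtopology (product_topology (\<lambda>_. TR) UNIV) (unitri_carrier k)) TR (\<lambda>x. F x p)"
    proof
      assume "\<exists>p'. \<forall>A. F A p = A p'"
      then obtain p' where "\<forall>A. F A p = A p'" by blast
      then have e: "(\<lambda>x. F x p) = (\<lambda>x. x p')" by auto
      show ?thesis unfolding e
        by (rule continuous_map_from_subtopology) (rule continuous_map_product_projection, simp)
    next
      assume "\<exists>c. \<forall>A. F A p = c"
      then obtain c where "\<forall>A. F A p = c" by blast
      then have e: "(\<lambda>x. F x p) = (\<lambda>x. c)" by auto
      show ?thesis unfolding e using TR by simp
    qed
  qed
qed

lemma pad_cont: "topspace TR = UNIV \<Longrightarrow> continuous_map (Unitri_top TR m) (Unitri_top TR (Suc m)) (pad m)"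
proof (rule cm_coord)
  fix p :: "nat \<times> nat"
  obtain i j where p: "p = (i,j)" by (cases p)
  show "(\<exists>p'. \<forall>A. pad m A p = A p') \<or> (\<exists>c. \<forall>A. pad m A p = (c::'a))"
    by (cases "i \<le> m \<and> j \<le> m") (auto simp: pad_def p)
qed (auto simp: pad_car)

lemma tlb_cont: "topspace TR = UNIV \<Longrightarrow> continuous_map (Unitri_top TR (Suc m)) (Unitri_top TR m) (tlb m)"
proof (rule cm_coord)
  fix p :: "nat \<times> nat"
  obtain i j where p: "p = (i,j)" by (cases p)
  show "(\<exists>p'. \<forall>A. tlb m A p = A p') \<or> (\<exists>c. \<forall>A. tlb m A p = (c::'a))"
    by (cases "i \<le> m \<and> j \<le> m") (auto simp: tlb_def p)
qed (auto simp: tlb_car)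

lemma brb_cont: "topspace TR = UNIV \<Longrightarrow> continuous_map (Unitri_top TR (Suc m)) (Unitri_top TR m) (brb m)"
proof (rule cm_coord)
  fix p :: "nat \<times> nat"
  obtain i j where p: "p = (i,j)" by (cases p)
  show "(\<exists>p'. \<forall>A. brb m A p = A p') \<or> (\<exists>c. \<forall>A. brb m A p = (c::'a))"
    by (cases "i \<le> m \<and> j \<le> m") (auto simp: brb_def p)
qed (auto simp: brb_car)

theorem lemma8p1:
  fixes n :: nat and TR :: "'r::comm_ring_1 topology"
    and G :: "('g, 'b) monoid_scheme" and TG :: "'g topology"
  assumes "n \<ge> 2"
    and "profinite_ring TR"
    and "profinite_group G TG"
  shows "T_kernel G TG (Unitri_bar n :: (nat \<times> nat \<Rightarrow> 'r) set monoid) (Unitri_bar_top TR n)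
       = T_kernel G TG (Unitri (n - 1) :: (nat \<times> nat \<Rightarrow> 'r) monoid) (Unitri_top TR (n - 1))"
proof -
  obtain m where n: "n = Suc m" and m: "0 < m" using assms(1) by (cases n) auto
  have nm: "n - 1 = m" using n by simp
  have n0: "0 < n" using n by simp
  have TR: "topspace TR = UNIV" using assms(2) by (simp add: profinite_ring_def)
  define q :: "(nat \<times> nat \<Rightarrow> 'r) \<Rightarrow> (nat \<times> nat \<Rightarrow> 'r) set" where "q = (\<lambda>M. central_sub n #>\<^bsub>Unitri n\<^esub> M)"
  have qc: "a \<in> unitri_carrier n \<Longrightarrow> q a = cls n a" for a
    unfolding q_def by (rule coset_cls[OF n0])
  have carbar: "carrier (Unitri_bar n :: (nat \<times> nat \<Rightarrow> 'r) set monoid) = cls n ` unitri_carrier n"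
    unfolding Unitri_bar_def carrier_FactGroup Ucar using coset_cls[OF n0] by auto
  have multbar: "C \<otimes>\<^bsub>(Unitri_bar n :: (nat \<times> nat \<Rightarrow> 'r) set monoid)\<^esub> D = C <#>\<^bsub>Unitri n\<^esub> D" for C D
    by (simp add: Unitri_bar_def)
  have onebar: "\<one>\<^bsub>(Unitri_bar n :: (nat \<times> nat \<Rightarrow> 'r) set monoid)\<^esub> = cls n \<one>\<^bsub>Unitri n\<^esub>"
    by (simp add: Unitri_bar_def central_cls)
  have topbar: "Unitri_bar_top TR n = quotient_topology (Unitri_top TR n) q"
    by (simp add: Unitri_bar_top_def q_def)
  have qcont: "continuous_map (Unitri_top TR n) (Unitri_bar_top TR n) q"
    unfolding topbar by (rule qt_cont)
  show ?thesis unfolding nm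
  proof (rule equalityI; rule subsetI)
    fix x assume x: "x \<in> T_kernel G TG (Unitri_bar n :: (nat \<times> nat \<Rightarrow> 'r) set monoid) (Unitri_bar_top TR n)"
    then have xG: "x \<in> carrier G" by (simp add: T_kernel_def)
    have xk: "\<And>g. g \<in> hom G (Unitri_bar n :: (nat \<times> nat \<Rightarrow> 'r) set monoid) \<Longrightarrow> continuous_map TG (Unitri_bar_top TR n) g
       \<Longrightarrow> x \<in> kernel G (Unitri_bar n :: (nat \<times> nat \<Rightarrow> 'r) set monoid) g"
      using x unfolding T_kernel_def by blast
    show "x \<in> T_kernel G TG (Unitri m :: (nat \<times> nat \<Rightarrow> 'r) monoid) (Unitri_top TR m)"
      unfolding T_kernel_def
    proof (intro IntI InterI)
      show "x \<in> carrier G" by (rule xG)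
      fix K assume "K \<in> {kernel G (Unitri m :: (nat \<times> nat \<Rightarrow> 'r) monoid) f |f. f \<in> hom G (Unitri m) \<and> continuous_map TG (Unitri_top TR m) f}"
      then obtain f where K: "K = kernel G (Unitri m :: (nat \<times> nat \<Rightarrow> 'r) monoid) f" and fh: "f \<in> hom G (Unitri m)"
        and fc: "continuous_map TG (Unitri_top TR m) f" by blast
      have fcar: "f y \<in> unitri_carrier m" if "y \<in> carrier G" for y
        using fh that by (auto simp: hom_def Ucar)
      define g where "g = (\<lambda>y. q (pad m (f y)))"
      have gq: "g y = cls n (pad m (f y))" if "y \<in> carrier G" for y
        unfolding g_def using qc pad_car[OF fcar[OF that]] n by simp
      have ghom: "g \<in> hom G (Unitri_bar n :: (nat \<times> nat \<Rightarrow> 'r) set monoid)"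
        unfolding hom_def
      proof (intro CollectI conjI ballI)
        show "g \<in> carrier G \<rightarrow> carrier (Unitri_bar n :: (nat \<times> nat \<Rightarrow> 'r) set monoid)"
        proof
          fix y assume y: "y \<in> carrier G"
          have "pad m (f y) \<in> unitri_carrier n" using pad_car[OF fcar[OF y]] n by simp
          then show "g y \<in> carrier (Unitri_bar n :: (nat \<times> nat \<Rightarrow> 'r) set monoid)"
            unfolding carbar gq[OF y] by blast
        qed
        fix y z assume y: "y \<in> carrier G" and z: "z \<in> carrier G"
        have fm: "f (y \<otimes>\<^bsub>G\<^esub> z) = f y \<otimes>\<^bsub>Unitri m\<^esub> f z" using fh y z by (simp add: hom_def)
        have pm: "f y \<otimes>\<^bsub>Unitri m\<^esub> f z \<in> unitri_carrier m" by (rule uc_mult[OF fcar[OF y] fcar[OF z]])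
        have "g (y \<otimes>\<^bsub>G\<^esub> z) = cls n (pad m (f y \<otimes>\<^bsub>Unitri m\<^esub> f z))"
          unfolding g_def fm using qc pad_car[OF pm] n by simp
        also have "\<dots> = cls n (pad m (f y) \<otimes>\<^bsub>Unitri n\<^esub> pad m (f z))"
          using pad_mult[OF fcar[OF y] fcar[OF z]] n by simp
        also have "\<dots> = cls n (pad m (f y)) <#>\<^bsub>Unitri n\<^esub> cls n (pad m (f z))"
          using setmult_cls[OF n0, of "pad m (f y)" "pad m (f z)"] pad_car[OF fcar[OF y]] pad_car[OF fcar[OF z]] n by simp
        finally show "g (y \<otimes>\<^bsub>G\<^esub> z) = g y \<otimes>\<^bsub>(Unitri_bar n :: (nat \<times> nat \<Rightarrow> 'r) set monoid)\<^esub> g z"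
          using gq y z by (simp add: multbar)
      qed
      have gcont: "continuous_map TG (Unitri_bar_top TR n) g"
      proof -
        have "continuous_map TG (Unitri_bar_top TR n) (q \<circ> (pad m \<circ> f))"
          using continuous_map_compose[OF continuous_map_compose[OF fc pad_cont[OF TR]] ] qcont n
          by (metis continuous_map_compose)
        then show ?thesis by (simp add: g_def o_def)
      qed
      have "g x = cls n \<one>\<^bsub>Unitri n\<^esub>" using xk[OF ghom gcont] by (simp add: kernel_def onebar)
      then have pin: "pad m (f x) \<in> cls n \<one>\<^bsub>Unitri n\<^esub>" using gq[OF xG] cls_self by metis
      have "f x = \<one>\<^bsub>Unitri m\<^esub>"
      proof (rule ext, clarify)
        fix i j
        show "f x (i,j) = \<one>\<^bsub>Unitri m\<^esub> (i,j)"
        proof (cases "i \<le> m \<and> j \<le> m")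
          case True
          then have "pad m (f x) (i,j) = \<one>\<^bsub>Unitri n\<^esub> (i,j)" using pin n by (simp add: cls_def)
          then show ?thesis using True n by (simp add: pad_def Uone)
        next
          case False
          then show ?thesis using fcar[OF xG] by (auto simp: uc_low Uone)
        qed
      qed
      then show "x \<in> K" unfolding K kernel_def using xG by simp
    qed
  next
    fix x assume x: "x \<in> T_kernel G TG (Unitri m :: (nat \<times> nat \<Rightarrow> 'r) monoid) (Unitri_top TR m)"
    then have xG: "x \<in> carrier G" by (simp add: T_kernel_def)
    have xk: "\<And>f. f \<in> hom G (Unitri m :: (nat \<times> nat \<Rightarrow> 'r) monoid) \<Longrightarrow> continuous_map TG (Unitri_top TR m) f
       \<Longrightarrow> x \<in> kernel G (Unitri m :: (nat \<times> nat \<Rightarrow> 'r) monoid) f"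
      using x unfolding T_kernel_def by blast
    show "x \<in> T_kernel G TG (Unitri_bar n :: (nat \<times> nat \<Rightarrow> 'r) set monoid) (Unitri_bar_top TR n)"
      unfolding T_kernel_def
    proof (intro IntI InterI)
      show "x \<in> carrier G" by (rule xG)
      fix K assume "K \<in> {kernel G (Unitri_bar n :: (nat \<times> nat \<Rightarrow> 'r) set monoid) g |g. g \<in> hom G (Unitri_bar n) \<and> continuous_map TG (Unitri_bar_top TR n) g}"
      then obtain g where K: "K = kernel G (Unitri_bar n :: (nat \<times> nat \<Rightarrow> 'r) set monoid) g"
        and gh: "g \<in> hom G (Unitri_bar n :: (nat \<times> nat \<Rightarrow> 'r) set monoid)"
        and gc: "continuous_map TG (Unitri_bar_top TR n) g" by blast
      have gy: "\<exists>a \<in> unitri_carrier n. g y = cls n a" if "y \<in> carrier G" for y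
      proof -
        have "g y \<in> cls n ` unitri_carrier n" using gh that unfolding hom_def carbar by blast
        then show ?thesis by blast
      qed
      have gm: "g (y \<otimes>\<^bsub>G\<^esub> z) = g y <#>\<^bsub>Unitri n\<^esub> g z" if "y \<in> carrier G" "z \<in> carrier G" for y z
        using gh that by (simp add: hom_def multbar)
      have main: "\<And>P :: (nat \<times> nat \<Rightarrow> 'r) \<Rightarrow> (nat \<times> nat \<Rightarrow> 'r).
          (\<And>a. a \<in> unitri_carrier n \<Longrightarrow> P a \<in> unitri_carrier m) \<Longrightarrow>
          (\<And>a b. a \<in> unitri_carrier n \<Longrightarrow> b \<in> unitri_carrier n \<Longrightarrow> P (a \<otimes>\<^bsub>Unitri n\<^esub> b) = P a \<otimes>\<^bsub>Unitri m\<^esub> P b) \<Longrightarrow>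
          (\<And>a d. d \<in> cls n a \<Longrightarrow> P d = P a) \<Longrightarrow>
          continuous_map (Unitri_top TR n) (Unitri_top TR m) P \<Longrightarrow>
          (\<forall>a \<in> unitri_carrier n. g x = cls n a \<longrightarrow> P a = \<one>\<^bsub>Unitri m\<^esub>)"
      proof -
        fix P :: "(nat \<times> nat \<Rightarrow> 'r) \<Rightarrow> (nat \<times> nat \<Rightarrow> 'r)"
        assume Pc: "\<And>a. a \<in> unitri_carrier n \<Longrightarrow> P a \<in> unitri_carrier m"
          and Pm: "\<And>a b. a \<in> unitri_carrier n \<Longrightarrow> b \<in> unitri_carrier n \<Longrightarrow> P (a \<otimes>\<^bsub>Unitri n\<^esub> b) = P a \<otimes>\<^bsub>Unitri m\<^esub> P b"
          and Pcls: "\<And>a d. d \<in> cls n a \<Longrightarrow> P d = P a"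
          and Pcont: "continuous_map (Unitri_top TR n) (Unitri_top TR m) P"
        define PP where "PP = (\<lambda>C. P (SOME a. a \<in> C))"
        have PPc: "PP (cls n a) = P a" for a
          unfolding PP_def using someI[of "\<lambda>d. d \<in> cls n a", OF cls_self] Pcls by blast
        have PPhom: "(\<lambda>y. PP (g y)) \<in> hom G (Unitri m)"
          unfolding hom_def
        proof (intro CollectI conjI ballI)
          show "(\<lambda>y. PP (g y)) \<in> carrier G \<rightarrow> carrier (Unitri m)"
            using gy PPc Pc by (fastforce simp: Ucar)
          fix y z assume y: "y \<in> carrier G" and z: "z \<in> carrier G"
          obtain a where a: "a \<in> unitri_carrier n" "g y = cls n a" using gy[OF y] by blast
          obtain b where b: "b \<in> unitri_carrier n" "g z = cls n b" using gy[OF z] by blast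
          show "PP (g (y \<otimes>\<^bsub>G\<^esub> z)) = PP (g y) \<otimes>\<^bsub>Unitri m\<^esub> PP (g z)"
            using gm[OF y z] a b setmult_cls[OF n0 a(1) b(1)] PPc Pm by simp
        qed
        have PPcont: "continuous_map (Unitri_bar_top TR n) (Unitri_top TR m) PP"
          unfolding topbar
        proof (rule qt_univ)
          show "continuous_map (Unitri_top TR n) (Unitri_top TR m) (\<lambda>x. PP (q x))"
            by (rule continuous_map_eq[OF Pcont]) (simp add: topU[OF TR] qc PPc)
          show "PP \<in> q ` topspace (Unitri_top TR n) \<rightarrow> topspace (Unitri_top TR m)"
            using Pc by (auto simp: topU[OF TR] qc PPc)
        qed
        have "continuous_map TG (Unitri_top TR m) (PP \<circ> g)"
          by (rule continuous_map_compose[OF gc PPcont])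
        then have "x \<in> kernel G (Unitri m :: (nat \<times> nat \<Rightarrow> 'r) monoid) (\<lambda>y. PP (g y))"
          using xk[OF PPhom] by (simp add: o_def)
        then have "PP (g x) = \<one>\<^bsub>Unitri m\<^esub>" by (simp add: kernel_def)
        then show "\<forall>a \<in> unitri_carrier n. g x = cls n a \<longrightarrow> P a = \<one>\<^bsub>Unitri m\<^esub>"
          using PPc by auto
      qed
      obtain a where a: "a \<in> unitri_carrier n" "g x = cls n a" using gy[OF xG] by blast
      have "\<forall>a \<in> unitri_carrier n. g x = cls n a \<longrightarrow> tlb m a = \<one>\<^bsub>Unitri m\<^esub>"
      proof (rule main)
        show "\<And>a. a \<in> unitri_carrier n \<Longrightarrow> tlb m a \<in> unitri_carrier m" using tlb_car n by simp
        show "\<And>a b. a \<in> unitri_carrier n \<Longrightarrow> b \<in> unitri_carrier n \<Longrightarrow> tlb m (a \<otimes>\<^bsub>Unitri n\<^esub> b) = tlb m a \<otimes>\<^bsub>Unitri m\<^esub> tlb m b"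
          using tlb_mult n by simp
        show "\<And>a d. d \<in> cls n a \<Longrightarrow> tlb m d = tlb m a" using cls_tlb n by simp
        show "continuous_map (Unitri_top TR n) (Unitri_top TR m) (tlb m)" using tlb_cont[OF TR] n by simp
      qed
      then have t: "tlb m a = \<one>\<^bsub>Unitri m\<^esub>" using a by blast
      have "\<forall>a \<in> unitri_carrier n. g x = cls n a \<longrightarrow> brb m a = \<one>\<^bsub>Unitri m\<^esub>"
      proof (rule main)
        show "\<And>a. a \<in> unitri_carrier n \<Longrightarrow> brb m a \<in> unitri_carrier m" using brb_car n by simp
        show "\<And>a b. a \<in> unitri_carrier n \<Longrightarrow> b \<in> unitri_carrier n \<Longrightarrow> brb m (a \<otimes>\<^bsub>Unitri n\<^esub> b) = brb m a \<otimes>\<^bsub>Unitri m\<^esub> brb m b"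
          using brb_mult n by simp
        show "\<And>a d. d \<in> cls n a \<Longrightarrow> brb m d = brb m a" using cls_brb n by simp
        show "continuous_map (Unitri_top TR n) (Unitri_top TR m) (brb m)" using brb_cont[OF TR] n by simp
      qed
      then have b: "brb m a = \<one>\<^bsub>Unitri m\<^esub>" using a by blast
      have "a \<in> cls n \<one>\<^bsub>Unitri n\<^esub>" using tlb_brb_one[OF m _ t b] a n by simp
      then have "g x = \<one>\<^bsub>(Unitri_bar n :: (nat \<times> nat \<Rightarrow> 'r) set monoid)\<^esub>"
        using a cls_same onebar by metis
      then show "x \<in> K" unfolding K kernel_def using xG by simp
    qed
  qed
qed

end
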